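(* Let $Y,Z$ be finite-dimensional real or complex vector spaces, $f$ a vector field on $Y$, $F\colon Y\to Z$ quadratic, and $g,\gamma$ vector fields on $Z$ with $F'(y)f(y)=g(F(y))$ and $F''(f(y),f(y))=\gamma(F(y))$ for all $y\in Y$. Let nonzero $b_1,\dots,b_s$ and $h>0$ be given, and let $z_0,z_1,Z_1,\dots,Z_s\in Z$ satisfy \[ Z_i = z_0 + h\sum_{j=1}^{i-1} b_j g(Z_j) + \frac h2 b_i g(Z_i) - \frac{h^2}{8} b_i^2\gamma(Z_i)\ (i=1,\dots,s),\qquad z_1 = z_0 + h\sum_{i=1}^s b_i g(Z_i). \] If $G$ is a quadratic map on $Z$ (into some finite-dimensional vector space), then \[ G(z_1) = G(z_0) + h\sum_{i=1}^s b_i G'(Z_i)g(Z_i) + \frac{h^3}{8}\sum_{i=1}^s b_i^3 G''\bigl(g(Z_i),\gamma(Z_i)\bigr). \]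
   Context: A map $F$ on a vector space is quadratic if for every base point $y_0$, $F(y)=F(y_0)+F'(y_0)(y-y_0)+\tfrac12F''(y-y_0,y-y_0)$ for all $y$, with $F''$ a constant symmetric bilinear map. *)

theory Defs
  imports "HOL-Analysis.Analysis"
begin

definition quadratic_map ::
  "('a::real_vector \<Rightarrow> 'b::real_vector) \<Rightarrow> ('a \<Rightarrow> 'a \<Rightarrow> 'b) \<Rightarrow> ('a \<Rightarrow> 'a \<Rightarrow> 'b) \<Rightarrow> bool"
where
  "quadratic_map F F' F'' \<longleftrightarrow>
     bilinear F'' \<and> (\<forall>u v. F'' u v = F'' v u) \<and> (\<forall>y0. linear (F' y0)) \<and>
     (\<forall>y0 y. F y = F y0 + F' y0 (y - y0) + (1/2) *\<^sub>R F'' (y - y0) (y - y0))"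

end

theory Submission
  imports Defs
begin

lemma quad_step:
  assumes q: "quadratic_map G G' G''"
    and Z: "Z = y + (1/2) *\<^sub>R k - c"
  shows "G (y + k) = G y + G' Z k + G'' k c"
proof -
  have bl: "bilinear G''" and sym: "\<And>u v. G'' u v = G'' v u" and lin: "linear (G' Z)"
    and ex: "\<And>p q. G q = G p + G' p (q - p) + (1/2) *\<^sub>R G'' (q - p) (q - p)"
    using q unfolding quadratic_map_def by auto
  define u where "u = (1/2) *\<^sub>R k"
  have k: "k = 2 *\<^sub>R u" unfolding u_def by simp
  have Z': "Z = y + u - c" using Z unfolding u_def by simp
  have e1: "y + k - Z = u + c" unfolding Z' k scaleR_2 by (simp add: algebra_simps)
  have e2: "y - Z = c - u" using Z unfolding u_def by (simp add: algebra_simps)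
  have A: "G (y + k) = G Z + G' Z (u + c) + (1/2) *\<^sub>R G'' (u + c) (u + c)"
    using ex[where p=Z and q="y+k"] unfolding e1 .
  have B: "G y = G Z + G' Z (c - u) + (1/2) *\<^sub>R G'' (c - u) (c - u)"
    using ex[where p=Z and q=y] unfolding e2 .
  have L1: "G' Z (u + c) = G' Z u + G' Z c" using lin by (simp add: linear_add)
  have L2: "G' Z (c - u) = G' Z c - G' Z u" using lin by (simp add: linear_diff)
  have L3: "G' Z k = 2 *\<^sub>R G' Z u" using lin k by (simp add: linear_scale)
  have Q1: "G'' (u + c) (u + c) = G'' u u + G'' u c + G'' c u + G'' c c"
    using bl by (simp add: bilinear_ladd bilinear_radd)
  have Q2: "G'' (c - u) (c - u) = G'' c c - G'' c u - G'' u c + G'' u u"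
    using bl by (simp add: bilinear_lsub bilinear_rsub algebra_simps)
  have Q3: "G'' k c = 2 *\<^sub>R G'' u c" using bl k by (simp add: bilinear_lmul)
  have D: "G (y + k) - G y = (G' Z (u + c) - G' Z (c - u))
      + (1/2) *\<^sub>R (G'' (u + c) (u + c) - G'' (c - u) (c - u))"
    using A B by (simp add: scaleR_diff_right)
  have D1: "G' Z (u + c) - G' Z (c - u) = G' Z k" using L1 L2 L3 by (simp add: scaleR_2)
  have D2: "G'' (u + c) (u + c) - G'' (c - u) (c - u) = 2 *\<^sub>R G'' k c"
    using Q1 Q2 Q3 sym[of c u] by (simp add: scaleR_2)
  have "G (y + k) - G y = G' Z k + G'' k c" using D D1 D2 by simp
  then show ?thesis by (simp add: algebra_simps)
qed

theorem theorem2p10: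
  fixes f :: "'y::euclidean_space \<Rightarrow> 'y"
    and F :: "'y \<Rightarrow> 'z::euclidean_space" and F' :: "'y \<Rightarrow> 'y \<Rightarrow> 'z" and F'' :: "'y \<Rightarrow> 'y \<Rightarrow> 'z"
    and g :: "'z \<Rightarrow> 'z" and \<gamma> :: "'z \<Rightarrow> 'z"
    and G :: "'z \<Rightarrow> 'w::euclidean_space" and G' :: "'z \<Rightarrow> 'z \<Rightarrow> 'w" and G'' :: "'z \<Rightarrow> 'z \<Rightarrow> 'w"
    and b :: "nat \<Rightarrow> real" and h :: real and s :: nat
    and z0 z1 :: 'z and Zs :: "nat \<Rightarrow> 'z"
  assumes F_quad: "quadratic_map F F' F''"
    and Fg: "\<And>y. F' y (f y) = g (F y)"
    and Fgamma: "\<And>y. F'' (f y) (f y) = \<gamma> (F y)"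
    and b_nz: "\<And>i. i \<in> {1..s} \<Longrightarrow> b i \<noteq> 0"
    and h_pos: "h > 0"
    and stages: "\<And>i. i \<in> {1..s} \<Longrightarrow>
        Zs i = z0 + h *\<^sub>R (\<Sum>j = 1..<i. b j *\<^sub>R g (Zs j))
                  + (h / 2 * b i) *\<^sub>R g (Zs i) - (h^2 / 8 * (b i)^2) *\<^sub>R \<gamma> (Zs i)"
    and step: "z1 = z0 + h *\<^sub>R (\<Sum>i = 1..s. b i *\<^sub>R g (Zs i))"
    and G_quad: "quadratic_map G G' G''"
  shows "G z1 = G z0 + h *\<^sub>R (\<Sum>i = 1..s. b i *\<^sub>R G' (Zs i) (g (Zs i)))
                + (h^3 / 8) *\<^sub>R (\<Sum>i = 1..s. (b i)^3 *\<^sub>R G'' (g (Zs i)) (\<gamma> (Zs i)))"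
proof -
  have bl: "bilinear G''" and lin: "\<And>y0. linear (G' y0)"
    using G_quad unfolding quadratic_map_def by auto
  define y where "y n = z0 + h *\<^sub>R (\<Sum>j = 1..<n. b j *\<^sub>R g (Zs j))" for n
  have per: "G (y (Suc i)) = G (y i) + h *\<^sub>R (b i *\<^sub>R G' (Zs i) (g (Zs i)))
                + (h^3 / 8) *\<^sub>R ((b i)^3 *\<^sub>R G'' (g (Zs i)) (\<gamma> (Zs i)))"
    if i: "i \<in> {1..s}" for i
  proof -
    define k where "k = (h * b i) *\<^sub>R g (Zs i)"
    define c where "c = (h^2 / 8 * (b i)^2) *\<^sub>R \<gamma> (Zs i)"
    have ys: "y (Suc i) = y i + k"
      using i unfolding y_def k_def by (simp add: scaleR_add_right)
    have Z: "Zs i = y i + (1/2) *\<^sub>R k - c"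
      using stages[OF i] unfolding y_def k_def c_def by (simp add: mult.commute)
    have "G (y (Suc i)) = G (y i) + G' (Zs i) k + G'' k c"
      using quad_step[OF G_quad Z] ys by simp
    moreover have "G' (Zs i) k = h *\<^sub>R (b i *\<^sub>R G' (Zs i) (g (Zs i)))"
      unfolding k_def using lin[of "Zs i"] by (simp add: linear_scale)
    moreover have "G'' k c = (h^3 / 8) *\<^sub>R ((b i)^3 *\<^sub>R G'' (g (Zs i)) (\<gamma> (Zs i)))"
      unfolding k_def c_def using bl
      by (simp add: bilinear_lmul bilinear_rmul power2_eq_square power3_eq_cube mult_ac)
    ultimately show ?thesis by simp
  qed
  have main: "n \<le> s \<Longrightarrow> G (y (Suc n)) = G z0 + h *\<^sub>R (\<Sum>i = 1..n. b i *\<^sub>R G' (Zs i) (g (Zs i)))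
                + (h^3 / 8) *\<^sub>R (\<Sum>i = 1..n. (b i)^3 *\<^sub>R G'' (g (Zs i)) (\<gamma> (Zs i)))" for n
  proof (induction n)
    case 0
    then show ?case unfolding y_def by simp
  next
    case (Suc n)
    then have IH: "G (y (Suc n)) = G z0 + h *\<^sub>R (\<Sum>i = 1..n. b i *\<^sub>R G' (Zs i) (g (Zs i)))
                + (h^3 / 8) *\<^sub>R (\<Sum>i = 1..n. (b i)^3 *\<^sub>R G'' (g (Zs i)) (\<gamma> (Zs i)))" by simp
    have "Suc n \<in> {1..s}" using Suc.prems by simp
    from per[OF this] IH show ?case
      by (simp add: scaleR_add_right algebra_simps)
  qed
  have "z1 = y (Suc s)" unfolding y_def step by (simp add: atLeastLessThanSuc_atLeastAtMost)
  then show ?thesis using main[of s] by simp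
qed

end
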